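(* Let $R$ be a commutative unital ring and $E$ an $R$-module such that $\mathrm{Ass}_R(E)$ is compact in the flat topology of $\mathrm{Spec}(R)$. Suppose that $S$ is a multiplicatively closed subset of $R$ with $E_S=0$. Then there is some $a\in S$ such that $E_a=0$, i.e. $a\in\mathcal O_R(E)$.
   Context: $\mathrm{Ass}_R(E)$ (the weak assassinator) is the set of prime ideals $P$ of $R$ that are minimal among the prime ideals containing $0:_Rx$ for some $x\in E$. The flat topology on $\mathrm{Spec}(R)$ is the topology whose closed sets are the images of $\mathrm{Spec}(T)\to\mathrm{Spec}(R)$ for flat ring morphisms $R\to T$; the sets $\mathrm V(I)=\{P\mid I\subseteq P\}$ with $I$ a finitely generated ideal form a basis of its open sets. For $a\in R$, $E_a$ is the localization of $E$ at $\{a^n\mid n\in\mathbb N\}$, and $\mathcal O_R(E)=\{a\in R\mid E_a=0\}$. Compactness does not require Hausdorffness. *)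

theory Defs
  imports "HOL-Algebra.Module" "HOL-Algebra.Ideal" "HOL-Analysis.Abstract_Topology"
begin

text \<open>Prime spectrum of a commutative ring (prime ideals are proper by the library definition).\<close>
definition Spec :: "('a, 'b) ring_scheme \<Rightarrow> 'a set set" where
  "Spec R = {P. primeideal P R}"

definition Vset :: "('a, 'b) ring_scheme \<Rightarrow> 'a set \<Rightarrow> 'a set set" where
  "Vset R I = {P \<in> Spec R. I \<subseteq> P}"

definition fg_ideal :: "('a, 'b) ring_scheme \<Rightarrow> 'a set \<Rightarrow> bool" where
  "fg_ideal R I \<longleftrightarrow> (\<exists>G. finite G \<and> G \<subseteq> carrier R \<and> I = Idl\<^bsub>R\<^esub> G)"

definition flat_topology :: "('a, 'b) ring_scheme \<Rightarrow> 'a set topology" where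
  "flat_topology R = topology_generated_by {Vset R I | I. fg_ideal R I}"

definition ann :: "('a, 'b) ring_scheme \<Rightarrow> ('a, 'c, 'd) module_scheme \<Rightarrow> 'c \<Rightarrow> 'a set" where
  "ann R E x = {r \<in> carrier R. r \<odot>\<^bsub>E\<^esub> x = \<zero>\<^bsub>E\<^esub>}"

text \<open>Weak assassinator: primes minimal among the primes containing 0 :_R x for some x in E.\<close>
definition wAss :: "('a, 'b) ring_scheme \<Rightarrow> ('a, 'c, 'd) module_scheme \<Rightarrow> 'a set set" where
  "wAss R E = {P \<in> Spec R. \<exists>x \<in> carrier E. ann R E x \<subseteq> P \<and>
       (\<forall>Q \<in> Spec R. ann R E x \<subseteq> Q \<and> Q \<subseteq> P \<longrightarrow> Q = P)}"

definition mult_closed :: "('a, 'b) ring_scheme \<Rightarrow> 'a set \<Rightarrow> bool" where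
  "mult_closed R S \<longleftrightarrow> S \<subseteq> carrier R \<and> \<one>\<^bsub>R\<^esub> \<in> S \<and>
       (\<forall>s \<in> S. \<forall>t \<in> S. s \<otimes>\<^bsub>R\<^esub> t \<in> S)"

text \<open>E_S = 0: unfolding the definition of the localization, every x/1 vanishes,
  i.e. every element of E is killed by some element of S.\<close>
definition loc_zero :: "('a, 'b) ring_scheme \<Rightarrow> ('a, 'c, 'd) module_scheme \<Rightarrow> 'a set \<Rightarrow> bool" where
  "loc_zero R E S \<longleftrightarrow> (\<forall>x \<in> carrier E. \<exists>s \<in> S. s \<odot>\<^bsub>E\<^esub> x = \<zero>\<^bsub>E\<^esub>)"

definition powers :: "('a, 'b) ring_scheme \<Rightarrow> 'a \<Rightarrow> 'a set" where
  "powers R a = {a [^]\<^bsub>R\<^esub> (n::nat) | n. True}"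

definition O_set :: "('a, 'b) ring_scheme \<Rightarrow> ('a, 'c, 'd) module_scheme \<Rightarrow> 'a set" where
  "O_set R E = {a \<in> carrier R. loc_zero R E (powers R a)}"

end

theory Submission
  imports Defs
begin


lemma (in ring) chain_union_ideal:
  assumes "C \<noteq> {}" "\<And>J. J \<in> C \<Longrightarrow> ideal J R"
    and ch: "\<And>X Y. X \<in> C \<Longrightarrow> Y \<in> C \<Longrightarrow> X \<subseteq> Y \<or> Y \<subseteq> X"
  shows "ideal (\<Union>C) R"
proof (intro subgroup.intro idealI[OF ring_axioms])
  show "\<Union>C \<subseteq> carrier (add_monoid R)" using assms(2) ideal.Icarr by fastforce
  show "x \<otimes>\<^bsub>add_monoid R\<^esub> y \<in> \<Union>C" if "x \<in> \<Union>C" "y \<in> \<Union>C" for x y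
  proof -
    from that obtain X Y where XY: "X \<in> C" "Y \<in> C" "x \<in> X" "y \<in> Y" by blast
    show ?thesis
    proof (cases "X \<subseteq> Y")
      case True
      then show ?thesis using XY assms(2)[of Y] by (auto intro!: additive_subgroup.a_closed[OF ideal.axioms(1)])
    next
      case False
      then have "Y \<subseteq> X" using ch XY by blast
      then show ?thesis using XY assms(2)[of X] by (auto intro!: additive_subgroup.a_closed[OF ideal.axioms(1)])
    qed
  qed
  show "\<one>\<^bsub>add_monoid R\<^esub> \<in> \<Union>C" using assms(1,2)
    by (auto intro: additive_subgroup.zero_closed ideal.axioms(1))
  show "inv\<^bsub>add_monoid R\<^esub> x \<in> \<Union>C" if "x \<in> \<Union>C" for x
    using that assms(2) by (auto simp flip: a_inv_def intro: additive_subgroup.a_inv_closed[OF ideal.axioms(1)])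
  show "x \<otimes> a \<in> \<Union>C" if "a \<in> \<Union>C" "x \<in> carrier R" for a x
    using that assms(2) by (auto intro: ideal.I_l_closed)
  show "a \<otimes> x \<in> \<Union>C" if "a \<in> \<Union>C" "x \<in> carrier R" for a x
    using that assms(2) by (auto intro: ideal.I_r_closed)
qed

lemma (in cring) prime_avoiding_powers:
  assumes I: "ideal I R" and a: "a \<in> carrier R" and np: "\<And>n::nat. a [^] n \<notin> I"
  shows "\<exists>P. primeideal P R \<and> I \<subseteq> P \<and> a \<notin> P"
proof -
  define A where "A = {J. ideal J R \<and> I \<subseteq> J \<and> (\<forall>n::nat. a [^] n \<notin> J)}"
  have "\<exists>M\<in>A. \<forall>X\<in>A. M \<subseteq> X \<longrightarrow> X = M"
  proof (rule subset_Zorn_nonempty)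
    show "A \<noteq> {}" using I np unfolding A_def by blast
    show "\<Union>C \<in> A" if "C \<noteq> {}" "subset.chain A C" for C
    proof -
      have "ideal (\<Union>C) R"
        apply (rule chain_union_ideal)
        using that unfolding subset_chain_def A_def by auto
      then show ?thesis using that unfolding subset_chain_def A_def by blast
    qed
  qed
  then obtain M where MA: "M \<in> A" and Mmax: "\<And>X. X \<in> A \<Longrightarrow> M \<subseteq> X \<Longrightarrow> X = M" by blast
  have Mi: "ideal M R" and IM: "I \<subseteq> M" and Mnp: "\<And>n::nat. a [^] n \<notin> M"
    using MA unfolding A_def by auto
  interpret M: ideal M R by (rule Mi)
  have ext: "\<exists>n::nat. a [^] n \<in> M <+>\<^bsub>R\<^esub> PIdl x" if x: "x \<in> carrier R" "x \<notin> M" for x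
  proof (rule ccontr)
    assume "\<not> ?thesis"
    moreover have "ideal (M <+>\<^bsub>R\<^esub> PIdl x) R" by (rule add_ideals[OF Mi cgenideal_ideal[OF x(1)]])
    moreover have "M \<subseteq> M <+>\<^bsub>R\<^esub> PIdl x"
    proof
      fix m assume "m \<in> M"
      moreover have "\<zero> \<in> PIdl x" using x unfolding cgenideal_def by (auto intro!: exI[of _ \<zero>])
      moreover have "m = m \<oplus> \<zero>" using \<open>m \<in> M\<close> M.Icarr by simp
      ultimately show "m \<in> M <+>\<^bsub>R\<^esub> PIdl x" unfolding set_add_def' by blast
    qed
    ultimately have "M <+>\<^bsub>R\<^esub> PIdl x \<in> A" using IM unfolding A_def by blast
    with Mmax have "M <+>\<^bsub>R\<^esub> PIdl x = M" using \<open>M \<subseteq> M <+>\<^bsub>R\<^esub> PIdl x\<close> by blast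
    moreover have "x \<in> M <+>\<^bsub>R\<^esub> PIdl x"
    proof -
      have "\<zero> \<in> M" by simp
      moreover have "x \<in> PIdl x" by (rule cgenideal_self[OF x(1)])
      moreover have "x = \<zero> \<oplus> x" using x by simp
      ultimately show ?thesis unfolding set_add_def' by blast
    qed
    ultimately show False using x by simp
  qed
  have "primeideal M R"
  proof (rule primeidealI[OF Mi is_cring])
    show "carrier R \<noteq> M" using Mnp[of 0] by auto
    show "x \<in> M \<or> y \<in> M" if xy: "x \<in> carrier R" "y \<in> carrier R" "x \<otimes> y \<in> M" for x y
    proof (rule ccontr)
      assume "\<not> ?thesis"
      then have "x \<notin> M" "y \<notin> M" by auto
      from ext[OF xy(1) this(1)] obtain m :: nat where "a [^] m \<in> M <+>\<^bsub>R\<^esub> PIdl x" by blast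
      then obtain p r where p: "p \<in> M" "r \<in> carrier R" "a [^] m = p \<oplus> r \<otimes> x"
        unfolding set_add_def' cgenideal_def by blast
      from ext[OF xy(2) \<open>y \<notin> M\<close>] obtain n :: nat where "a [^] n \<in> M <+>\<^bsub>R\<^esub> PIdl y" by blast
      then obtain q s where q: "q \<in> M" "s \<in> carrier R" "a [^] n = q \<oplus> s \<otimes> y"
        unfolding set_add_def' cgenideal_def by blast
      have pc: "p \<in> carrier R" "q \<in> carrier R" using p q M.Icarr by auto
      have "a [^] (m + n) = (p \<oplus> r \<otimes> x) \<otimes> (q \<oplus> s \<otimes> y)"
        using p q a by (simp add: nat_pow_mult[symmetric])
      also have "\<dots> = p \<otimes> (q \<oplus> s \<otimes> y) \<oplus> ((r \<otimes> x) \<otimes> q \<oplus> (r \<otimes> s) \<otimes> (x \<otimes> y))"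
        using pc p q xy by (simp add: l_distr r_distr m_ac a_ac)
      also have "\<dots> \<in> M"
      proof -
        have t1: "p \<otimes> (q \<oplus> s \<otimes> y) \<in> M" using pc p q xy by (intro M.I_r_closed) auto
        have t2: "(r \<otimes> x) \<otimes> q \<in> M" using pc p q xy by (intro M.I_l_closed) auto
        have t3: "(r \<otimes> s) \<otimes> (x \<otimes> y) \<in> M" using p q by (intro M.I_l_closed[OF xy(3)]) auto
        show ?thesis using t1 t2 t3 by (intro M.a_closed)
      qed
      finally show False using Mnp by blast
    qed
  qed
  moreover have "a \<notin> M" using Mnp[of 1] a by simp
  ultimately show ?thesis using IM by blast
qed


lemma (in cring) minimal_prime_below:
  assumes P: "primeideal P R" and IP: "I \<subseteq> P"
  shows "\<exists>Q. primeideal Q R \<and> I \<subseteq> Q \<and> Q \<subseteq> P \<and>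
           (\<forall>Q'. primeideal Q' R \<and> I \<subseteq> Q' \<and> Q' \<subseteq> Q \<longrightarrow> Q' = Q)"
proof -
  define A where "A = {Q. primeideal Q R \<and> I \<subseteq> Q \<and> Q \<subseteq> P}"
  have "\<exists>M\<in>uminus ` A. \<forall>X\<in>uminus ` A. M \<subseteq> X \<longrightarrow> X = M"
  proof (rule subset_Zorn_nonempty)
    show "uminus ` A \<noteq> {}" using P IP unfolding A_def by blast
    show "\<Union>C \<in> uminus ` A" if ne: "C \<noteq> {}" and ch: "subset.chain (uminus ` A) C" for C
    proof -
      define D where "D = uminus ` C"
      have CA: "C \<subseteq> uminus ` A" using ch unfolding subset_chain_def by blast
      have DA: "D \<subseteq> A"
      proof
        fix X assume "X \<in> D"
        then obtain X' where X': "X' \<in> C" "X = -X'" unfolding D_def by blast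
        then obtain Y where "Y \<in> A" "X' = -Y" using CA by blast
        then show "X \<in> A" using X' by simp
      qed
      have Dne: "D \<noteq> {}" using ne unfolding D_def by blast
      have Dch: "X \<subseteq> Y \<or> Y \<subseteq> X" if XD: "X \<in> D" "Y \<in> D" for X Y
      proof -
        obtain X' Y' where "X' \<in> C" "Y' \<in> C" "X = -X'" "Y = -Y'" using XD unfolding D_def by blast
        moreover have "X' \<subseteq> Y' \<or> Y' \<subseteq> X'" using ch \<open>X' \<in> C\<close> \<open>Y' \<in> C\<close> unfolding subset_chain_def by blast
        ultimately show ?thesis by auto
      qed
      have Dp: "\<And>X. X \<in> D \<Longrightarrow> primeideal X R" using DA unfolding A_def by blast
      have Di: "ideal (\<Inter>D) R"
        by (rule i_Intersect[OF primeideal.axioms(1)[OF Dp] Dne])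
      have "primeideal (\<Inter>D) R"
      proof (rule primeidealI[OF Di is_cring])
        obtain Q0 where Q0: "Q0 \<in> D" using Dne by blast
        show "carrier R \<noteq> \<Inter>D"
        proof
          assume "carrier R = \<Inter>D"
          then have "carrier R \<subseteq> Q0" using Q0 by blast
          moreover have "Q0 \<subseteq> carrier R" using ideal.Icarr[OF primeideal.axioms(1)[OF Dp[OF Q0]]] by blast
          ultimately show False using primeideal.I_notcarr[OF Dp[OF Q0]] by blast
        qed
        show "x \<in> \<Inter>D \<or> y \<in> \<Inter>D" if xy: "x \<in> carrier R" "y \<in> carrier R" "x \<otimes> y \<in> \<Inter>D" for x y
        proof (rule ccontr)
          assume "\<not> ?thesis"
          then obtain X1 X2 where X: "X1 \<in> D" "X2 \<in> D" "x \<notin> X1" "y \<notin> X2" by blast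
          show False
          proof (cases "X1 \<subseteq> X2")
            case True
            then have "y \<notin> X1" using X by blast
            then show False using primeideal.I_prime[OF Dp[OF X(1)] xy(1,2)] xy(3) X by blast
          next
            case False
            then have "X2 \<subseteq> X1" using Dch X by blast
            then have "x \<notin> X2" using X by blast
            then show False using primeideal.I_prime[OF Dp[OF X(2)] xy(1,2)] xy(3) X by blast
          qed
        qed
      qed
      moreover have "I \<subseteq> \<Inter>D" using DA unfolding A_def by blast
      moreover have "\<Inter>D \<subseteq> P" using DA Dne unfolding A_def by blast
      ultimately have "\<Inter>D \<in> A" unfolding A_def by blast
      then have "- \<Inter>D \<in> uminus ` A" by (rule imageI)
      moreover have "\<Union>C = - \<Inter>D" unfolding D_def by (simp add: Compl_INT)
      ultimately show ?thesis by simp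
    qed
  qed
  then obtain M where M1: "M \<in> uminus ` A" and M2: "\<forall>X\<in>uminus ` A. M \<subseteq> X \<longrightarrow> X = M" ..
  from M1 obtain Q where MQ: "M = -Q" and QA: "Q \<in> A" by (rule imageE)
  have Qmin: "-X = -Q" if "X \<in> A" "-Q \<subseteq> -X" for X
  proof -
    have mem: "-X \<in> uminus ` A" using that(1) by (rule imageI)
    have "M \<subseteq> -X \<longrightarrow> -X = M" using M2 mem by (rule bspec)
    then show ?thesis using that(2) MQ by simp
  qed
  have Qp: "primeideal Q R" and IQ: "I \<subseteq> Q" and QP: "Q \<subseteq> P" using QA unfolding A_def by simp_all
  have Qm: "\<forall>Q'. primeideal Q' R \<and> I \<subseteq> Q' \<and> Q' \<subseteq> Q \<longrightarrow> Q' = Q"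
  proof (intro allI impI)
    fix Q' assume H: "primeideal Q' R \<and> I \<subseteq> Q' \<and> Q' \<subseteq> Q"
    then have "Q' \<in> A" using QP unfolding A_def by auto
    moreover have "-Q \<subseteq> -Q'" using H by auto
    ultimately have "-Q' = -Q" by (rule Qmin)
    then show "Q' = Q" by simp
  qed
  show ?thesis
    by (rule exI[of _ Q]) (intro conjI Qp IQ QP Qm)
qed


lemma ann_ideal:
  fixes R (structure)
  assumes "Module.module R E" "x \<in> carrier E"
  shows "ideal (ann R E x) R"
proof -
  interpret Module.module R E by fact
  show ?thesis unfolding ann_def
  proof (intro subgroup.intro idealI[OF ring_axioms])
    show "{r \<in> carrier R. r \<odot>\<^bsub>E\<^esub> x = \<zero>\<^bsub>E\<^esub>} \<subseteq> carrier (add_monoid R)" by auto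
    show "a \<otimes>\<^bsub>add_monoid R\<^esub> b \<in> {r \<in> carrier R. r \<odot>\<^bsub>E\<^esub> x = \<zero>\<^bsub>E\<^esub>}"
      if "a \<in> {r \<in> carrier R. r \<odot>\<^bsub>E\<^esub> x = \<zero>\<^bsub>E\<^esub>}" "b \<in> {r \<in> carrier R. r \<odot>\<^bsub>E\<^esub> x = \<zero>\<^bsub>E\<^esub>}" for a b
      using that assms(2) by (simp add: smult_l_distr)
    show "\<one>\<^bsub>add_monoid R\<^esub> \<in> {r \<in> carrier R. r \<odot>\<^bsub>E\<^esub> x = \<zero>\<^bsub>E\<^esub>}" using assms(2) by simp
    show "inv\<^bsub>add_monoid R\<^esub> a \<in> {r \<in> carrier R. r \<odot>\<^bsub>E\<^esub> x = \<zero>\<^bsub>E\<^esub>}"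
      if "a \<in> {r \<in> carrier R. r \<odot>\<^bsub>E\<^esub> x = \<zero>\<^bsub>E\<^esub>}" for a
      using that assms(2) by (simp add: smult_l_minus flip: a_inv_def)
    show "c \<otimes> a \<in> {r \<in> carrier R. r \<odot>\<^bsub>E\<^esub> x = \<zero>\<^bsub>E\<^esub>}"
      if "a \<in> {r \<in> carrier R. r \<odot>\<^bsub>E\<^esub> x = \<zero>\<^bsub>E\<^esub>}" "c \<in> carrier R" for a c
      using that assms(2) by (simp add: smult_assoc1)
    show "a \<otimes> c \<in> {r \<in> carrier R. r \<odot>\<^bsub>E\<^esub> x = \<zero>\<^bsub>E\<^esub>}"
      if "a \<in> {r \<in> carrier R. r \<odot>\<^bsub>E\<^esub> x = \<zero>\<^bsub>E\<^esub>}" "c \<in> carrier R" for a c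
      using that assms(2) by (simp add: smult_assoc1 m_comm[of a c])
  qed
qed

lemma finite_prod_in_primes:
  assumes "cring R" "mult_closed R S" "finite T" "T \<subseteq> S"
  shows "\<exists>a\<in>S. \<forall>P. primeideal P R \<longrightarrow> (\<exists>t\<in>T. t \<in> P) \<longrightarrow> a \<in> P"
  using assms(3,4)
proof (induction T rule: finite_induct)
  case empty
  then show ?case using assms(2) unfolding mult_closed_def by blast
next
  case (insert t T)
  then obtain a where a: "a \<in> S" "\<And>P. primeideal P R \<Longrightarrow> (\<exists>t\<in>T. t \<in> P) \<Longrightarrow> a \<in> P" by auto
  have tS: "t \<in> S" using insert by auto
  have SR: "S \<subseteq> carrier R" using assms(2) unfolding mult_closed_def by auto
  have c1: "t \<otimes>\<^bsub>R\<^esub> a \<in> S" using assms(2) a tS unfolding mult_closed_def by blast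
  have c2: "t \<otimes>\<^bsub>R\<^esub> a \<in> P" if P: "primeideal P R" and ex: "\<exists>t'\<in>insert t T. t' \<in> P" for P
  proof (cases "t \<in> P")
    case True
    have "a \<in> carrier R" using a SR by blast
    then show ?thesis using ideal.I_r_closed[OF primeideal.axioms(1)[OF P] True] by simp
  next
    case False
    then have "a \<in> P" using ex a(2)[OF P] by blast
    moreover have "t \<in> carrier R" using tS SR by blast
    ultimately show ?thesis using ideal.I_l_closed[OF primeideal.axioms(1)[OF P]] by simp
  qed
  show ?case using c1 c2 by blast
qed


theorem proposition2p10:
  fixes R :: "('a, 'b) ring_scheme" and E :: "('a, 'c, 'd) module_scheme" and S :: "'a set"
  assumes "Module.module R E"
    and "compactin (flat_topology R) (wAss R E)"
    and "mult_closed R S"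
    and "loc_zero R E S"
  shows "\<exists>a \<in> S. a \<in> O_set R E"
proof -
  interpret Module.module R E by (rule assms(1))
  have SR: "S \<subseteq> carrier R" using assms(3) unfolding mult_closed_def by blast
  have wS: "\<exists>s\<in>S. s \<in> P" if "P \<in> wAss R E" for P
  proof -
    from that obtain x where x: "x \<in> carrier E" "ann R E x \<subseteq> P" unfolding wAss_def by blast
    from assms(4) x(1) obtain s where s: "s \<in> S" "s \<odot>\<^bsub>E\<^esub> x = \<zero>\<^bsub>E\<^esub>" unfolding loc_zero_def by blast
    then have "s \<in> ann R E x" using SR unfolding ann_def by blast
    then show ?thesis using x s by blast
  qed
  define f where "f = (\<lambda>s. Vset R (Idl\<^bsub>R\<^esub> {s}))"
  have opn: "\<forall>U\<in>f ` S. openin (flat_topology R) U"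
  proof
    fix U assume "U \<in> f ` S"
    then obtain s where s: "s \<in> S" "U = f s" by blast
    have "fg_ideal R (Idl\<^bsub>R\<^esub> {s})" unfolding fg_ideal_def using s SR by blast
    then have "U \<in> {Vset R I | I. fg_ideal R I}" using s unfolding f_def by blast
    then show "openin (flat_topology R) U"
      unfolding flat_topology_def openin_topology_generated_by_iff
      by (rule generate_topology_on.Basis)
  qed
  have cov: "wAss R E \<subseteq> \<Union>(f ` S)"
  proof
    fix P assume P: "P \<in> wAss R E"
    then have Ps: "P \<in> Spec R" unfolding wAss_def by blast
    then have Pp: "primeideal P R" unfolding Spec_def by blast
    from wS[OF P] obtain s where s: "s \<in> S" "s \<in> P" by blast
    have "Idl\<^bsub>R\<^esub> {s} \<subseteq> P"
      by (rule genideal_minimal[OF primeideal.axioms(1)[OF Pp]]) (use s in blast)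
    then have "P \<in> f s" using Ps unfolding f_def Vset_def by blast
    then show "P \<in> \<Union>(f ` S)" using s by blast
  qed
  have "\<exists>F. finite F \<and> F \<subseteq> f ` S \<and> wAss R E \<subseteq> \<Union>F"
    using assms(2) opn cov unfolding compactin_def by blast
  then obtain F where F: "finite F" "F \<subseteq> f ` S" "wAss R E \<subseteq> \<Union>F" by blast
  from finite_subset_image[OF F(1,2)] obtain T where T: "T \<subseteq> S" "finite T" "F = f ` T" by blast
  from finite_prod_in_primes[OF is_cring assms(3) T(2,1)] obtain a where
    a: "a \<in> S" "\<And>P. primeideal P R \<Longrightarrow> (\<exists>t\<in>T. t \<in> P) \<Longrightarrow> a \<in> P" by blast
  have aR: "a \<in> carrier R" using a SR by blast
  have aw: "a \<in> P" if P: "P \<in> wAss R E" for P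
  proof -
    from P F(3) T(3) obtain t where t: "t \<in> T" "P \<in> f t" by blast
    then have Pp: "primeideal P R" and IP: "Idl\<^bsub>R\<^esub> {t} \<subseteq> P" unfolding f_def Vset_def Spec_def by auto
    have "t \<in> carrier R" using t T SR by blast
    then have "t \<in> Idl\<^bsub>R\<^esub> {t}" using genideal_self[of "{t}"] by blast
    then have "t \<in> P" using IP by blast
    then show ?thesis using a(2)[OF Pp] t by blast
  qed
  have "a \<in> O_set R E"
    unfolding O_set_def loc_zero_def powers_def
  proof (intro CollectI conjI aR ballI)
    fix x assume x: "x \<in> carrier E"
    show "\<exists>s\<in>{a [^]\<^bsub>R\<^esub> (n::nat) |n. True}. s \<odot>\<^bsub>E\<^esub> x = \<zero>\<^bsub>E\<^esub>"
    proof (rule ccontr)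
      assume H: "\<not> ?thesis"
      have np: "a [^]\<^bsub>R\<^esub> n \<notin> ann R E x" for n :: nat
        using H unfolding ann_def by blast
      obtain P where P: "primeideal P R" "ann R E x \<subseteq> P" "a \<notin> P"
        using prime_avoiding_powers[OF ann_ideal[OF assms(1) x] aR np] by blast
      obtain Q where Q: "primeideal Q R" "ann R E x \<subseteq> Q" "Q \<subseteq> P"
        "\<forall>Q'. primeideal Q' R \<and> ann R E x \<subseteq> Q' \<and> Q' \<subseteq> Q \<longrightarrow> Q' = Q"
        using minimal_prime_below[OF P(1,2)] by blast
      have "Q \<in> wAss R E"
        unfolding wAss_def Spec_def using Q x by blast
      then have "a \<in> Q" by (rule aw)
      then show False using Q(3) P(3) by blast
    qed
  qed
  then show ?thesis using a(1) by blast
qed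

end
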